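(* The normalized geometric discord $\mathcal{D}$ does not attain a maximum on the set of two-qubit states of rank $2$; that is, there is no rank-$2$ two-qubit state $\rho_0$ with $\mathcal{D}(\rho_0)\ge\mathcal{D}(\rho)$ for all rank-$2$ two-qubit states $\rho$.
   Context: A two-qubit state is a density matrix (positive semidefinite, trace one) on $\mathbb{C}^2\otimes\mathbb{C}^2$, and its rank is its rank as a matrix. The set $\Omega_0$ of classical-quantum states consists of states $\sum_k p_k|\psi_k\rangle\langle\psi_k|\otimes\rho_k^B$ with $\{|\psi_k\rangle\}$ an orthonormal basis of the first qubit, $p_k\ge0$ summing to one, and $\rho_k^B$ states of the second qubit. The normalized geometric discord is $\mathcal{D}(\rho)=2\min_{\chi\in\Omega_0}\operatorname{Tr}\big((\rho-\chi)^\dagger(\rho-\chi)\big)$; its maximum over all two-qubit states is $1$. *)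

theory Defs
  imports "HOL-Analysis.Analysis"
begin

text \<open>Single-qubit space: complex^2; two-qubit space: complex^(2 \<times> 2),
  index (i,j) meaning basis vector e_i (first qubit) tensor e_j (second qubit).
  Matrices: complex^n^n, entry A $ r $ c.\<close>

type_synonym qmat = "complex^2^2"
type_synonym qqmat = "complex^(2\<times>2)^(2\<times>2)"

definition psd :: "complex^'n^'n \<Rightarrow> bool" where
  "psd A \<longleftrightarrow> (\<forall>r c. A $ c $ r = cnj (A $ r $ c)) \<and>
     (\<forall>x :: complex^'n. 0 \<le> Re (\<Sum>r\<in>UNIV. \<Sum>c\<in>UNIV. cnj (x $ r) * A $ r $ c * x $ c))"

definition mtrace :: "complex^'n^'n \<Rightarrow> complex" where
  "mtrace A = (\<Sum>i\<in>UNIV. A $ i $ i)"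

definition is_state :: "complex^'n^'n \<Rightarrow> bool" where
  "is_state A \<longleftrightarrow> psd A \<and> mtrace A = 1"

definition tensor :: "qmat \<Rightarrow> qmat \<Rightarrow> qqmat" where
  "tensor A B = (\<chi> r c. A $ fst r $ fst c * B $ snd r $ snd c)"

definition projector :: "complex^2 \<Rightarrow> qmat" where
  "projector v = (\<chi> r c. v $ r * cnj (v $ c))"

definition orthonormal_basis2 :: "(2 \<Rightarrow> complex^2) \<Rightarrow> bool" where
  "orthonormal_basis2 \<psi> \<longleftrightarrow>
     (\<forall>k l. (\<Sum>i\<in>UNIV. cnj (\<psi> k $ i) * \<psi> l $ i) = (if k = l then 1 else 0))"

definition Omega0 :: "qqmat set" where
  "Omega0 = {(\<Sum>k\<in>UNIV. p k *\<^sub>R tensor (projector (\<psi> k)) (\<rho> k)) |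
              \<psi> p \<rho>. orthonormal_basis2 \<psi> \<and> (\<forall>k. 0 \<le> p k) \<and> (\<Sum>k\<in>UNIV. p k) = 1 \<and>
                 (\<forall>k. is_state (\<rho> k))}"

definition hs_sq :: "qqmat \<Rightarrow> real" where
  "hs_sq A = Re (mtrace (\<chi> r c. \<Sum>k\<in>UNIV. cnj (A $ k $ r) * A $ k $ c))"

definition geom_discord :: "qqmat \<Rightarrow> real" where
  "geom_discord \<rho> = 2 * (INF X\<in>Omega0. hs_sq (\<rho> - X))"

end

theory Submission
  imports Defs
begin

lemma sum_22: "sum f (UNIV::(2\<times>2) set) = f (1,1) + f (1,2) + f (2,1) + f (2,2)"
proof -
  have "sum f (UNIV::(2\<times>2) set) = sum f (UNIV \<times> UNIV)" by simp
  also have "\<dots> = (\<Sum>a\<in>UNIV. \<Sum>b\<in>UNIV. f (a,b))" by (simp add: sum.cartesian_product)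
  finally show ?thesis by (simp add: sum_2 add.assoc)
qed

lemma cmod_sq_cnj: "complex_of_real ((cmod z)\<^sup>2) = cnj z * z"
  by (metis complex_norm_square mult.commute)

lemma hs_sq_alt: "hs_sq A = (\<Sum>r\<in>UNIV. \<Sum>c\<in>UNIV. (cmod (A $ r $ c))\<^sup>2)"
proof -
  have "hs_sq A = Re (\<Sum>c\<in>UNIV. \<Sum>r\<in>UNIV. cnj (A $ r $ c) * A $ r $ c)"
    by (simp add: hs_sq_def mtrace_def)
  also have "\<dots> = (\<Sum>c\<in>UNIV. \<Sum>r\<in>UNIV. (cmod (A $ r $ c))\<^sup>2)"
    by (simp add: Re_sum cmod_sq_cnj[symmetric] del: of_real_power) 
  also have "\<dots> = (\<Sum>r\<in>UNIV. \<Sum>c\<in>UNIV. (cmod (A $ r $ c))\<^sup>2)"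
    by (rule sum.swap)
  finally show ?thesis .
qed

definition bf :: "complex^'n^'n \<Rightarrow> complex^'n \<Rightarrow> complex^'n \<Rightarrow> complex" where
  "bf A x y = (\<Sum>r\<in>UNIV. \<Sum>c\<in>UNIV. cnj (x$r) * A$r$c * y$c)"

lemma bf_add_left: "bf A (x + y) z = bf A x z + bf A y z"
  by (simp add: bf_def distrib_right sum.distrib)
lemma bf_add_right: "bf A z (x + y) = bf A z x + bf A z y"
  by (simp add: bf_def distrib_left sum.distrib)
lemma bf_scale_left: "bf A (t *s x) y = cnj t * bf A x y"
  by (simp add: bf_def sum_distrib_left mult.assoc)
lemma bf_scale_right: "bf A x (t *s y) = t * bf A x y"
  by (simp add: bf_def sum_distrib_left algebra_simps)
lemma bf_herm:
  assumes "\<forall>r c. A $ c $ r = cnj (A $ r $ c)"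
  shows "bf A y x = cnj (bf A x y)"
proof -
  have "bf A y x = (\<Sum>c\<in>UNIV. \<Sum>r\<in>UNIV. cnj (y$c) * A$c$r * x$r)"
    by (simp add: bf_def)
  also have "\<dots> = (\<Sum>r\<in>UNIV. \<Sum>c\<in>UNIV. cnj (y$c) * A$c$r * x$r)"
    by (rule sum.swap)
  also have "\<dots> = cnj (bf A x y)"
  proof -
    have h: "cnj (A$r$c) = A$c$r" for r c using assms by (metis complex_cnj_cnj)
    show ?thesis by (simp add: bf_def h mult.commute mult.left_commute)
  qed
  finally show ?thesis .
qed

lemma psd_herm: "psd A \<Longrightarrow> A $ c $ r = cnj (A $ r $ c)"
  unfolding psd_def by blast
lemma psd_herm_all: "psd A \<Longrightarrow> \<forall>r c. A $ c $ r = cnj (A $ r $ c)"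
  unfolding psd_def by blast
lemma psd_nonneg: "psd A \<Longrightarrow> 0 \<le> Re (bf A x x)"
  unfolding psd_def bf_def by blast
lemma psd_real: "psd A \<Longrightarrow> bf A x x = complex_of_real (Re (bf A x x))"
proof -
  assume "psd A"
  then have "bf A x x = cnj (bf A x x)" using bf_herm[OF psd_herm_all, of A x x] by simp
  then have "Im (bf A x x) = 0" by (simp add: complex_eq_iff)
  then show ?thesis by (simp add: complex_eq_iff)
qed

lemma cs_aux:
  fixes P Q :: real and z :: complex
  assumes "\<And>t. 0 \<le> P + 2 * Re (t * z) + (cmod t)\<^sup>2 * Q" and "0 \<le> Q"
  shows "(cmod z)\<^sup>2 \<le> P * Q"
proof (cases "Q > 0")
  case True
  have "0 \<le> P + 2 * Re ((- cnj z / Q) * z) + (cmod (- cnj z / Q))\<^sup>2 * Q" by (rule assms)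
  also have "Re ((- cnj z / Q) * z) = - (cmod z)\<^sup>2 / Q"
    by (simp add: cmod_sq_cnj[symmetric] del: of_real_power)
  also have "(cmod (- cnj z / Q))\<^sup>2 * Q = (cmod z)\<^sup>2 / Q"
    using True by (simp add: norm_divide power_divide power2_eq_square)
  finally have "0 \<le> P - (cmod z)\<^sup>2 / Q" by simp
  then show ?thesis using True by (simp add: field_simps)
next
  case False
  then have Q: "Q = 0" using assms(2) by simp
  show ?thesis
  proof (cases "z = 0")
    case True then show ?thesis using Q by simp
  next
    case False
    define s where "s = (\<bar>P\<bar> + 1) / (cmod z)\<^sup>2"
    have "0 \<le> P + 2 * Re ((- s * cnj z) * z)" using assms(1)[of "- s * cnj z"] Q by simp
    also have "Re ((- s * cnj z) * z) = - (s * (cmod z)\<^sup>2)"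
      by (simp add: mult.assoc cmod_sq_cnj[symmetric] del: of_real_power)
    also have "s * (cmod z)\<^sup>2 = \<bar>P\<bar> + 1" using False by (simp add: s_def)
    finally have "0 \<le> P - 2 * (\<bar>P\<bar> + 1)" by simp
    then show ?thesis by simp
  qed
qed

lemma psd_cs:
  assumes "psd A"
  shows "(cmod (bf A x y))\<^sup>2 \<le> Re (bf A x x) * Re (bf A y y)"
proof (rule cs_aux)
  show "0 \<le> Re (bf A y y)" using assms by (rule psd_nonneg)
  fix t :: complex
  have h: "\<forall>r c. A $ c $ r = cnj (A $ r $ c)" using assms by (rule psd_herm_all)
  have "0 \<le> Re (bf A (x + t *s y) (x + t *s y))" using assms by (rule psd_nonneg)
  also have "bf A (x + t *s y) (x + t *s y) =
      bf A x x + (t * bf A x y + cnj (t * bf A x y)) + (cnj t * t) * bf A y y"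
    by (simp add: bf_add_left bf_add_right bf_scale_left bf_scale_right bf_herm[OF h, of x y] algebra_simps)
  also have "cnj t * t = complex_of_real ((cmod t)\<^sup>2)" by (rule cmod_sq_cnj[symmetric])
  also have "t * bf A x y + cnj (t * bf A x y) = complex_of_real (2 * Re (t * bf A x y))"
    by (rule complex_add_cnj)
  also have "Re (bf A x x + complex_of_real (2 * Re (t * bf A x y)) + complex_of_real ((cmod t)\<^sup>2) * bf A y y)
      = Re (bf A x x) + 2 * Re (t * bf A x y) + (cmod t)\<^sup>2 * Re (bf A y y)"
    by simp
  finally show "0 \<le> Re (bf A x x) + 2 * Re (t * bf A x y) + (cmod t)\<^sup>2 * Re (bf A y y)" .
qed

lemma cnj_axis: "cnj (axis i (1::complex) $ r) = (if r = i then 1 else 0)"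
  by (simp add: axis_def)
lemma ifmul: "(if P then 1 else 0) * (x::complex) = (if P then x else 0)" by simp
lemma bf_axis_left: "bf A (axis i 1) y = (\<Sum>c\<in>UNIV. A$i$c * y$c)"
proof -
  have "bf A (axis i 1) y = (\<Sum>r\<in>UNIV. cnj (axis i 1 $ r) * (\<Sum>c\<in>UNIV. A$r$c * y$c))"
    by (simp add: bf_def sum_distrib_left mult.assoc)
  also have "\<dots> = (\<Sum>r\<in>UNIV. if r = i then (\<Sum>c\<in>UNIV. A$r$c * y$c) else 0)"
    by (simp only: cnj_axis ifmul)
  also have "\<dots> = (\<Sum>c\<in>UNIV. A$i$c * y$c)" by (simp add: sum.delta)
  finally show ?thesis .
qed
lemma bf_axis_axis: "bf A (axis i 1) (axis j 1) = A$i$j"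
proof -
  have "bf A (axis i 1) (axis j 1) = (\<Sum>c\<in>UNIV. A$i$c * axis j 1 $ c)" by (rule bf_axis_left)
  also have "\<dots> = (\<Sum>c\<in>UNIV. if c = j then A$i$c else 0)"
    by (rule sum.cong) (auto simp: axis_def)
  finally show ?thesis by (simp add: sum.delta')
qed

lemma psd_diag: "psd A \<Longrightarrow> A$i$i = complex_of_real (Re (A$i$i)) \<and> 0 \<le> Re (A$i$i)"
  using psd_real[of A "axis i 1"] psd_nonneg[of A "axis i 1"] by (simp add: bf_axis_axis)

lemma psd_entry: "psd A \<Longrightarrow> (cmod (A$i$j))\<^sup>2 \<le> Re (A$i$i) * Re (A$j$j)"
  using psd_cs[of A "axis i 1" "axis j 1"] by (simp add: bf_axis_axis)

lemma rank_le1: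
  fixes A :: "complex^'n^'n"
  assumes st: "is_state A" and eq: "\<And>i j. (cmod (A$i$j))\<^sup>2 = Re (A$i$i) * Re (A$j$j)"
  shows "rank A \<le> 1"
proof -
  have psd: "psd A" using st by (simp add: is_state_def)
  define d where "d i = Re (A$i$i)" for i
  have dA: "A$i$i = complex_of_real (d i)" for i using psd_diag[OF psd] by (simp add: d_def)
  have "(\<Sum>i\<in>UNIV. A$i$i) = 1" using st by (simp add: is_state_def mtrace_def)
  then have "(\<Sum>i\<in>UNIV. d i) = 1" by (simp add: dA) (metis of_real_eq_1_iff of_real_sum)
  then obtain k where dk: "d k \<noteq> 0" by (metis sum.neutral zero_neq_one)
  have key: "A$j$i = A$j$k / complex_of_real (d k) * A$k$i" for i j
  proof -
    define w where "w = complex_of_real (d k) *s axis i (1::complex) + (- A$k$i) *s axis k 1"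
    have h: "\<forall>r c. A $ c $ r = cnj (A $ r $ c)" using psd by (rule psd_herm_all)
    have aik: "A$i$k = cnj (A$k$i)" using h by blast
    have "bf A w w = complex_of_real (d k) * (complex_of_real (d k) * A$i$i - cnj (A$k$i) * A$k$i)"
      unfolding w_def
      by (simp only: bf_add_left bf_add_right bf_scale_left bf_scale_right bf_axis_axis)
        (simp add: aik dA algebra_simps)
    also have "cnj (A$k$i) * A$k$i = complex_of_real (d k * d i)"
      using eq[of k i] by (simp add: cmod_sq_cnj[symmetric] d_def del: of_real_power)
    finally have "bf A w w = 0" by (simp add: dA)
    then have "(cmod (bf A (axis j 1) w))\<^sup>2 \<le> 0" using psd_cs[OF psd, of "axis j 1" w] by simp
    then have "bf A (axis j 1) w = 0" by simp
    then have "complex_of_real (d k) * A$j$i - A$k$i * A$j$k = 0"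
      unfolding w_def by (simp only: bf_add_right bf_scale_right bf_axis_axis) (simp add: algebra_simps)
    then show ?thesis using dk by (simp add: field_simps)
  qed
  have "rows A \<subseteq> vec.span {row k A}"
  proof
    fix v assume "v \<in> rows A"
    then obtain j where v: "v = row j A" by (auto simp: rows_def)
    have "row j A $ i = ((A$j$k / complex_of_real (d k)) *s row k A) $ i" for i
      unfolding row_def using key[of j i] by simp
    then have "v = (A$j$k / complex_of_real (d k)) *s row k A"
      by (simp add: v vec_eq_iff)
    then show "v \<in> vec.span {row k A}" by (simp add: vec.span_base vec.span_scale)
  qed
  then have "vec.dim (rows A) \<le> card {row k A}" by (rule vec.dim_le_card) simp
  then show ?thesis by (simp add: row_rank_def_gen)
qed

lemma purity:
  fixes A :: qqmat
  assumes st: "is_state A" and rk: "rank A = 2"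
  shows "hs_sq A < 1"
proof (rule ccontr)
  assume "\<not> hs_sq A < 1"
  then have ge: "1 \<le> hs_sq A" by simp
  have psd: "psd A" using st by (simp add: is_state_def)
  define d where "d i = Re (A$i$i)" for i
  have dA: "A$i$i = complex_of_real (d i)" for i using psd_diag[OF psd] by (simp add: d_def)
  have "(\<Sum>i\<in>UNIV. A$i$i) = 1" using st by (simp add: is_state_def mtrace_def)
  then have sd: "(\<Sum>i\<in>UNIV. d i) = 1" by (simp add: dA) (metis of_real_eq_1_iff of_real_sum)
  have ent: "(cmod (A$r$c))\<^sup>2 \<le> d r * d c" for r c using psd_entry[OF psd] by (simp add: d_def)
  have "(\<Sum>r\<in>UNIV. \<Sum>c\<in>UNIV. d r * d c) = 1"
    by (simp add: sum_product[symmetric] sd)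
  then have "(\<Sum>r\<in>UNIV. \<Sum>c\<in>UNIV. d r * d c - (cmod (A$r$c))\<^sup>2) \<le> 0"
    using ge by (simp add: hs_sq_alt sum_subtractf)
  moreover have "\<forall>r\<in>UNIV. 0 \<le> (\<Sum>c\<in>UNIV. d r * d c - (cmod (A$r$c))\<^sup>2)"
    using ent by (simp add: sum_nonneg)
  ultimately have s0: "(\<Sum>r\<in>UNIV. \<Sum>c\<in>UNIV. d r * d c - (cmod (A$r$c))\<^sup>2) = 0"
    by (meson order_antisym sum_nonneg)
  have z: "\<forall>r\<in>UNIV. (\<Sum>c\<in>UNIV. d r * d c - (cmod (A$r$c))\<^sup>2) = 0"
    using iffD1[OF sum_nonneg_eq_0_iff s0] ent by (simp add: sum_nonneg)
  have "(cmod (A$i$j))\<^sup>2 = Re (A$i$i) * Re (A$j$j)" for i j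
  proof -
    have "(\<Sum>c\<in>UNIV. d i * d c - (cmod (A$i$c))\<^sup>2) = 0" using z by blast
    then have "\<forall>c\<in>UNIV. d i * d c - (cmod (A$i$c))\<^sup>2 = 0"
      using sum_nonneg_eq_0_iff[of UNIV "\<lambda>c. d i * d c - (cmod (A$i$c))\<^sup>2"] ent by simp
    then have "d i * d j - (cmod (A$i$j))\<^sup>2 = 0" by blast
    then show ?thesis by (simp add: d_def)
  qed
  then have "rank A \<le> 1" using rank_le1[OF st] by blast
  then show False using rk by simp
qed

lemma psd_scaleR:
  assumes "psd B" "0 \<le> c"
  shows "psd (c *\<^sub>R B)"
proof -
  have h: "\<forall>r c. B $ c $ r = cnj (B $ r $ c)" using assms(1) by (rule psd_herm_all)
  have h': "cnj (B$r$c) = B$c$r" for r c using h by (metis complex_cnj_cnj)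
  have "(c *\<^sub>R B) $ s $ r = cnj ((c *\<^sub>R B) $ r $ s)" for r s
    by (simp only: vector_scaleR_component) (simp add: scaleR_conv_of_real h')
  moreover have "0 \<le> Re (\<Sum>r\<in>UNIV. \<Sum>s\<in>UNIV. cnj (x $ r) * (c *\<^sub>R B) $ r $ s * x $ s)" for x
  proof -
    have "(\<Sum>r\<in>UNIV. \<Sum>s\<in>UNIV. cnj (x $ r) * (c *\<^sub>R B) $ r $ s * x $ s) = complex_of_real c * bf B x x"
      by (simp only: vector_scaleR_component) (simp add: bf_def sum_distrib_left scaleR_conv_of_real algebra_simps)
    then show ?thesis using psd_nonneg[OF assms(1), of x] assms(2) by simp
  qed
  ultimately show ?thesis unfolding psd_def by blast
qed

definition st0 :: qmat where "st0 = (\<chi> r c. if r = 1 \<and> c = 1 then 1 else 0)"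

lemma st0_state: "is_state st0"
proof -
  have "psd st0"
    unfolding psd_def st0_def
    by (simp add: sum_2 forall_2 cmod_sq_cnj[symmetric] del: of_real_power)
  moreover have "mtrace st0 = 1" by (simp add: mtrace_def st0_def sum_2)
  ultimately show ?thesis by (simp add: is_state_def)
qed

definition blk :: "complex^2 \<Rightarrow> qqmat \<Rightarrow> qmat" where
  "blk v A = (\<chi> r2 c2. \<Sum>a\<in>UNIV. \<Sum>b\<in>UNIV. projector v $ b $ a * A$(a,r2)$(b,c2))"

lemma blk_psd:
  assumes "psd A"
  shows "psd (blk v A)"
proof -
  have h: "\<forall>r c. A $ c $ r = cnj (A $ r $ c)" using assms by (rule psd_herm_all)
  have h': "cnj (A$r$c) = A$c$r" for r c using h by (metis complex_cnj_cnj)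
  have "blk v A $ c $ r = cnj (blk v A $ r $ c)" for r c
    by (simp add: blk_def projector_def sum_2 h' algebra_simps)
  moreover have "0 \<le> Re (\<Sum>r\<in>UNIV. \<Sum>s\<in>UNIV. cnj (x $ r) * blk v A $ r $ s * x $ s)" for x
  proof -
    define y :: "complex^(2\<times>2)" where "y = (\<chi> p. v $ fst p * x $ snd p)"
    have "(\<Sum>r\<in>UNIV. \<Sum>s\<in>UNIV. cnj (x $ r) * blk v A $ r $ s * x $ s) = bf A y y"
      by (simp add: bf_def blk_def projector_def y_def sum_2 sum_22 algebra_simps)
    then show ?thesis using psd_nonneg[OF assms, of y] by simp
  qed
  ultimately show ?thesis unfolding psd_def by blast
qed

lemma tensor_scaleR: "tensor P (c *\<^sub>R M) = c *\<^sub>R tensor P M"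
  by (simp add: tensor_def vec_eq_iff vector_scaleR_component)

lemma psd_trace_zero:
  fixes B :: qmat
  assumes "psd B" "Re (mtrace B) = 0"
  shows "B = 0"
proof -
  have d: "B$i$i = complex_of_real (Re (B$i$i)) \<and> 0 \<le> Re (B$i$i)" for i using psd_diag[OF assms(1)] .
  have "Re (B$1$1) + Re (B$2$2) = 0" using assms(2) by (simp add: mtrace_def sum_2)
  then have z: "Re (B$i$i) = 0" for i using d[of 1] d[of 2] exhaust_2[of i] by auto
  have "(cmod (B$i$j))\<^sup>2 \<le> 0" for i j using psd_entry[OF assms(1), of i j] z by simp
  then show ?thesis by (simp add: vec_eq_iff)
qed

lemma dephase_in_Omega0:
  assumes psd: "psd A" and on: "orthonormal_basis2 \<psi>"
    and tr: "(\<Sum>k\<in>UNIV. Re (mtrace (blk (\<psi> k) A))) = 1"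
  shows "(\<Sum>k\<in>UNIV. tensor (projector (\<psi> k)) (blk (\<psi> k) A)) \<in> Omega0"
proof -
  define p where "p k = Re (mtrace (blk (\<psi> k) A))" for k
  define \<sigma> where "\<sigma> k = (if p k = 0 then st0 else (1 / p k) *\<^sub>R blk (\<psi> k) A)" for k
  have bpsd: "psd (blk (\<psi> k) A)" for k using blk_psd[OF psd] .
  have pnn: "0 \<le> p k" for k
  proof -
    have "Re (mtrace (blk (\<psi> k) A)) = Re (blk (\<psi> k) A $ 1 $ 1) + Re (blk (\<psi> k) A $ 2 $ 2)"
      by (simp add: mtrace_def sum_2)
    then show ?thesis using psd_diag[OF bpsd, of k 1] psd_diag[OF bpsd, of k 2] by (simp add: p_def)
  qed
  have trr: "mtrace (blk (\<psi> k) A) = complex_of_real (p k)" for k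
  proof -
    have "mtrace (blk (\<psi> k) A) = blk (\<psi> k) A $ 1 $ 1 + blk (\<psi> k) A $ 2 $ 2"
      by (simp add: mtrace_def sum_2)
    also have "\<dots> = complex_of_real (Re (blk (\<psi> k) A $ 1 $ 1) + Re (blk (\<psi> k) A $ 2 $ 2))"
      using psd_diag[OF bpsd, of k 1] psd_diag[OF bpsd, of k 2] by (metis of_real_add)
    finally show ?thesis by (simp add: p_def mtrace_def sum_2)
  qed
  have ps: "p k *\<^sub>R \<sigma> k = blk (\<psi> k) A" for k
  proof (cases "p k = 0")
    case True
    then have "blk (\<psi> k) A = 0" using psd_trace_zero[OF bpsd] by (simp add: p_def)
    then show ?thesis using True by (simp add: \<sigma>_def)
  next
    case False then show ?thesis by (simp add: \<sigma>_def)
  qed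
  have sst: "is_state (\<sigma> k)" for k
  proof (cases "p k = 0")
    case True then show ?thesis by (simp add: \<sigma>_def st0_state)
  next
    case False
    then have pp: "0 < p k" using pnn[of k] by simp
    have "psd ((1 / p k) *\<^sub>R blk (\<psi> k) A)" using psd_scaleR[OF bpsd] pp by simp
    moreover have "mtrace ((1 / p k) *\<^sub>R blk (\<psi> k) A) = 1"
    proof -
      have "mtrace ((1 / p k) *\<^sub>R blk (\<psi> k) A) = (1 / p k) *\<^sub>R mtrace (blk (\<psi> k) A)"
        by (simp add: mtrace_def scaleR_sum_right vector_scaleR_component)
      also have "\<dots> = 1" using pp by (simp add: trr scaleR_conv_of_real)
      finally show ?thesis .
    qed
    ultimately show ?thesis using False by (simp add: \<sigma>_def is_state_def)
  qed
  have "(\<Sum>k\<in>UNIV. tensor (projector (\<psi> k)) (blk (\<psi> k) A)) =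
        (\<Sum>k\<in>UNIV. p k *\<^sub>R tensor (projector (\<psi> k)) (\<sigma> k))"
    by (simp add: tensor_scaleR[symmetric] ps)
  moreover have "(\<Sum>k\<in>UNIV. p k) = 1" using tr by (simp add: p_def)
  ultimately show ?thesis unfolding Omega0_def using on pnn sst by blast
qed

definition hh :: complex where "hh = complex_of_real (sqrt (1/2))"
lemma hh_cnj[simp]: "cnj hh = hh" by (simp add: hh_def)
lemma hh_sq[simp]: "hh * hh = 1/2"
  by (simp add: hh_def of_real_mult[symmetric] del: of_real_mult)
lemma hh_sq'[simp]: "hh * (hh * x) = x / 2"
  by (simp add: mult.assoc[symmetric])

definition psz :: "2 \<Rightarrow> complex^2" where "psz k = (\<chi> i. if i = k then 1 else 0)"
definition psx :: "2 \<Rightarrow> complex^2" where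
  "psx k = (\<chi> i. if i = 1 then hh else (if k = 1 then hh else - hh))"
definition psy :: "2 \<Rightarrow> complex^2" where
  "psy k = (\<chi> i. if i = 1 then hh else (if k = 1 then \<i> * hh else - \<i> * hh))"

lemma on_z: "orthonormal_basis2 psz"
  unfolding orthonormal_basis2_def psz_def by (simp add: sum_2 forall_2)
lemma on_x: "orthonormal_basis2 psx"
  unfolding orthonormal_basis2_def psx_def by (simp add: sum_2 forall_2)
lemma on_y: "orthonormal_basis2 psy"
  unfolding orthonormal_basis2_def psy_def by (simp add: sum_2 forall_2 algebra_simps)

lemma proj_z: "projector (psz k) = (\<chi> r c. if r = k \<and> c = k then 1 else 0)"
  by (simp add: projector_def psz_def vec_eq_iff)
lemma proj_x1: "projector (psx 1) = (\<chi> r c. 1/2)"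
  by (simp add: projector_def psx_def vec_eq_iff forall_2)
lemma proj_x2: "projector (psx 2) = (\<chi> r c. if r = c then 1/2 else -1/2)"
  by (simp add: projector_def psx_def vec_eq_iff forall_2)
lemma proj_y1: "projector (psy 1) = (\<chi> r c. if r = c then 1/2 else (if r = 1 then -\<i>/2 else \<i>/2))"
  by (simp add: projector_def psy_def vec_eq_iff forall_2 algebra_simps)
lemma proj_y2: "projector (psy 2) = (\<chi> r c. if r = c then 1/2 else (if r = 1 then \<i>/2 else -\<i>/2))"
  by (simp add: projector_def psy_def vec_eq_iff forall_2 algebra_simps)

definition deph :: "(2 \<Rightarrow> complex^2) \<Rightarrow> qqmat \<Rightarrow> qqmat" where
  "deph \<psi> A = (\<Sum>k\<in>UNIV. tensor (projector (\<psi> k)) (blk (\<psi> k) A))"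

lemma deph_z:
  "deph psz A $ (1,r) $ (1,c) = A $ (1,r) $ (1,c)"
  "deph psz A $ (1,r) $ (2,c) = 0"
  "deph psz A $ (2,r) $ (1,c) = 0"
  "deph psz A $ (2,r) $ (2,c) = A $ (2,r) $ (2,c)"
  by (simp_all add: deph_def tensor_def blk_def proj_z sum_2)

lemma deph_x:
  "deph psx A $ (1,r) $ (1,c) = (A $ (1,r) $ (1,c) + A $ (2,r) $ (2,c)) / 2"
  "deph psx A $ (1,r) $ (2,c) = (A $ (1,r) $ (2,c) + A $ (2,r) $ (1,c)) / 2"
  "deph psx A $ (2,r) $ (1,c) = (A $ (1,r) $ (2,c) + A $ (2,r) $ (1,c)) / 2"
  "deph psx A $ (2,r) $ (2,c) = (A $ (1,r) $ (1,c) + A $ (2,r) $ (2,c)) / 2"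
  by (simp_all add: deph_def tensor_def blk_def proj_x1 proj_x2 sum_2 algebra_simps)

lemma deph_y:
  "deph psy A $ (1,r) $ (1,c) = (A $ (1,r) $ (1,c) + A $ (2,r) $ (2,c)) / 2"
  "deph psy A $ (1,r) $ (2,c) = (A $ (1,r) $ (2,c) - A $ (2,r) $ (1,c)) / 2"
  "deph psy A $ (2,r) $ (1,c) = (A $ (2,r) $ (1,c) - A $ (1,r) $ (2,c)) / 2"
  "deph psy A $ (2,r) $ (2,c) = (A $ (1,r) $ (1,c) + A $ (2,r) $ (2,c)) / 2"
  by (simp_all add: deph_def tensor_def blk_def proj_y1 proj_y2 sum_2 algebra_simps)

lemma tr_z: "(\<Sum>k\<in>UNIV. Re (mtrace (blk (psz k) A))) = Re (mtrace A)"
  by (simp add: mtrace_def blk_def proj_z sum_2 sum_22)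
lemma tr_x: "(\<Sum>k\<in>UNIV. Re (mtrace (blk (psx k) A))) = Re (mtrace A)"
  by (simp add: mtrace_def blk_def proj_x1 proj_x2 sum_2 sum_22)
lemma tr_y: "(\<Sum>k\<in>UNIV. Re (mtrace (blk (psy k) A))) = Re (mtrace A)"
  by (simp add: mtrace_def blk_def proj_y1 proj_y2 sum_2 sum_22 algebra_simps)

lemma sum_blocks:
  fixes f :: "2\<times>2 \<Rightarrow> 2\<times>2 \<Rightarrow> real"
  shows "(\<Sum>r\<in>UNIV. \<Sum>c\<in>UNIV. f r c) =
    (\<Sum>r\<in>UNIV. \<Sum>c\<in>UNIV. f (1,r) (1,c) + f (1,r) (2,c) + f (2,r) (1,c) + f (2,r) (2,c))"
  by (simp add: sum_22 sum_2 ac_simps)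

lemma blockid:
  fixes a b c d :: complex
  shows "((cmod (a - a))\<^sup>2 + (cmod (b - 0))\<^sup>2 + (cmod (c - 0))\<^sup>2 + (cmod (d - d))\<^sup>2) +
    ((cmod (a - (a + d) / 2))\<^sup>2 + (cmod (b - (b + c) / 2))\<^sup>2 + (cmod (c - (b + c) / 2))\<^sup>2 + (cmod (d - (a + d) / 2))\<^sup>2) +
    ((cmod (a - (a + d) / 2))\<^sup>2 + (cmod (b - (b - c) / 2))\<^sup>2 + (cmod (c - (c - b) / 2))\<^sup>2 + (cmod (d - (a + d) / 2))\<^sup>2)
    = 2 * ((cmod a)\<^sup>2 + (cmod b)\<^sup>2 + (cmod c)\<^sup>2 + (cmod d)\<^sup>2) - (cmod (a + d))\<^sup>2"
proof -
  have "complex_of_real (((cmod (a - a))\<^sup>2 + (cmod (b - 0))\<^sup>2 + (cmod (c - 0))\<^sup>2 + (cmod (d - d))\<^sup>2) +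
    ((cmod (a - (a + d) / 2))\<^sup>2 + (cmod (b - (b + c) / 2))\<^sup>2 + (cmod (c - (b + c) / 2))\<^sup>2 + (cmod (d - (a + d) / 2))\<^sup>2) +
    ((cmod (a - (a + d) / 2))\<^sup>2 + (cmod (b - (b - c) / 2))\<^sup>2 + (cmod (c - (c - b) / 2))\<^sup>2 + (cmod (d - (a + d) / 2))\<^sup>2))
    = complex_of_real (2 * ((cmod a)\<^sup>2 + (cmod b)\<^sup>2 + (cmod c)\<^sup>2 + (cmod d)\<^sup>2) - (cmod (a + d))\<^sup>2)"
    by (simp only: of_real_add of_real_diff of_real_mult of_real_numeral cmod_sq_cnj)
       (simp add: field_simps)
  then show ?thesis by (simp only: of_real_eq_iff)
qed

lemma three:
  "hs_sq (A - deph psz A) + hs_sq (A - deph psx A) + hs_sq (A - deph psy A) =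
   2 * hs_sq A - (\<Sum>r\<in>UNIV. \<Sum>c\<in>UNIV. (cmod (A$(1,r)$(1,c) + A$(2,r)$(2,c)))\<^sup>2)"
proof -
  define F where "F M r c = (cmod (M$(1,r)$(1,c)))\<^sup>2 + (cmod (M$(1,r)$(2,c)))\<^sup>2 +
     (cmod (M$(2,r)$(1,c)))\<^sup>2 + (cmod (M$(2,r)$(2,c)))\<^sup>2" for M :: qqmat and r c
  have hs: "hs_sq M = (\<Sum>r\<in>UNIV. \<Sum>c\<in>UNIV. F M r c)" for M
    unfolding hs_sq_alt F_def by (rule sum_blocks)
  have pw: "F (A - deph psz A) r c + F (A - deph psx A) r c + F (A - deph psy A) r c
      = 2 * F A r c - (cmod (A$(1,r)$(1,c) + A$(2,r)$(2,c)))\<^sup>2" for r c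
    unfolding F_def
    by (simp only: vector_minus_component deph_z deph_x deph_y) (rule blockid)
  show ?thesis
    unfolding hs by (simp add: pw sum.distrib[symmetric] sum_subtractf sum_distrib_left)
qed

lemma trace_bound:
  fixes A :: qqmat
  assumes "mtrace A = 1"
  shows "1/2 \<le> (\<Sum>r\<in>UNIV. \<Sum>c\<in>UNIV. (cmod (A$(1,r)$(1,c) + A$(2,r)$(2,c)))\<^sup>2)"
proof -
  define N where "N r c = A$(1,r)$(1,c) + A$(2,r)$(2,c)" for r c
  have t: "N 1 1 + N 2 2 = 1" using assms by (simp add: mtrace_def sum_22 N_def algebra_simps)
  then have t': "Re (N 1 1) + Re (N 2 2) = 1" by (metis one_complex.simps(1) plus_complex.simps(1))
  have "(\<Sum>r\<in>UNIV. \<Sum>c\<in>UNIV. (cmod (N r c))\<^sup>2) =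
    (cmod (N 1 1))\<^sup>2 + (cmod (N 1 2))\<^sup>2 + (cmod (N 2 1))\<^sup>2 + (cmod (N 2 2))\<^sup>2"
    by (simp add: sum_2)
  moreover have e1: "(Re z)\<^sup>2 \<le> (cmod z)\<^sup>2" for z :: complex
    using power_mono[OF abs_Re_le_cmod[of z] abs_ge_zero, of 2] by simp
  moreover have "(Re (N 1 1))\<^sup>2 + (Re (N 2 2))\<^sup>2 \<ge> 1/2"
  proof -
    have "0 \<le> (Re (N 1 1) - Re (N 2 2))\<^sup>2" by simp
    moreover have "(Re (N 1 1) + Re (N 2 2))\<^sup>2 = 1" using t' by simp
    ultimately show ?thesis by (simp add: power2_eq_square algebra_simps)
  qed
  ultimately have "1/2 \<le> (\<Sum>r\<in>UNIV. \<Sum>c\<in>UNIV. (cmod (N r c))\<^sup>2)"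
    using e1[of "N 1 1"] e1[of "N 2 2"] zero_le_power2[of "cmod (N 1 2)"] zero_le_power2[of "cmod (N 2 1)"]
    by linarith
  then show ?thesis by (simp add: N_def)
qed

lemma hs_nonneg: "0 \<le> hs_sq M" by (simp add: hs_sq_alt sum_nonneg)

lemma upper:
  assumes st: "is_state A" and rk: "rank A = 2"
  shows "geom_discord A < 1"
proof -
  have psd: "psd A" and tr1: "mtrace A = 1" using st by (auto simp: is_state_def)
  have "hs_sq A < 1" using purity[OF st rk] .
  then have "hs_sq (A - deph psz A) + hs_sq (A - deph psx A) + hs_sq (A - deph psy A) < 3/2"
    using three[of A] trace_bound[OF tr1] by simp
  then have "hs_sq (A - deph psz A) < 1/2 \<or> hs_sq (A - deph psx A) < 1/2 \<or> hs_sq (A - deph psy A) < 1/2"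
    by linarith
  then obtain \<psi> where on: "orthonormal_basis2 \<psi>"
      and trp: "(\<Sum>k\<in>UNIV. Re (mtrace (blk (\<psi> k) A))) = Re (mtrace A)"
      and small: "hs_sq (A - deph \<psi> A) < 1/2"
    using on_z on_x on_y tr_z[of A] tr_x[of A] tr_y[of A] by blast
  have X: "deph \<psi> A \<in> Omega0"
    unfolding deph_def by (rule dephase_in_Omega0[OF psd on]) (simp add: trp tr1)
  have bdd: "bdd_below ((\<lambda>X. hs_sq (A - X)) ` Omega0)"
    by (rule bdd_belowI[of _ 0]) (auto simp: hs_nonneg)
  have "(INF X\<in>Omega0. hs_sq (A - X)) \<le> hs_sq (A - deph \<psi> A)"
    by (rule cINF_lower[OF bdd X])
  then show ?thesis using small by (simp add: geom_discord_def)
qed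

definition rhoe :: "real \<Rightarrow> qqmat" where
  "rhoe e = (\<chi> r c. complex_of_real ((if fst r = snd r \<and> fst c = snd c then (1-e)/2 else 0) +
                        (if r = (1,1) \<and> c = (1,1) then e else 0)))"

lemma rhoe_state:
  assumes "0 \<le> e" "e \<le> 1"
  shows "is_state (rhoe e)"
proof -
  have "\<forall>r c. rhoe e $ c $ r = cnj (rhoe e $ r $ c)"
    by (auto simp: rhoe_def)
  moreover have "0 \<le> Re (\<Sum>r\<in>UNIV. \<Sum>c\<in>UNIV. cnj (x $ r) * rhoe e $ r $ c * x $ c)" for x
  proof -
    have "(\<Sum>r\<in>UNIV. \<Sum>c\<in>UNIV. cnj (x $ r) * rhoe e $ r $ c * x $ c) =
      complex_of_real ((1-e)/2) * (cnj (x$(1,1) + x$(2,2)) * (x$(1,1) + x$(2,2))) +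
      complex_of_real e * (cnj (x$(1,1)) * x$(1,1))"
      by (simp add: rhoe_def sum_22 algebra_simps)
    also have "\<dots> = complex_of_real ((1-e)/2 * (cmod (x$(1,1) + x$(2,2)))\<^sup>2 + e * (cmod (x$(1,1)))\<^sup>2)"
      by (simp only: cmod_sq_cnj[symmetric] of_real_add of_real_mult)
    finally show ?thesis using assms by simp
  qed
  ultimately have "psd (rhoe e)" unfolding psd_def by blast
  moreover have "mtrace (rhoe e) = 1"
    by (simp add: mtrace_def rhoe_def sum_22)
  ultimately show ?thesis by (simp add: is_state_def)
qed

lemma UNIV_22: "(UNIV::(2\<times>2) set) = {(1,1),(1,2),(2,1),(2,2)}"
proof -
  have "x \<in> {(1,1),(1,2),(2,1),(2,2)}" for x :: "2\<times>2"
  proof (cases x)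
    case (Pair a b) then show ?thesis using exhaust_2[of a] exhaust_2[of b] by auto
  qed
  then show ?thesis by auto
qed

lemma rows_im: "rows A = (\<lambda>i. row i A) ` UNIV" by (auto simp: rows_def)

lemma rhoe_rank:
  assumes "0 < e" "e < 1"
  shows "rank (rhoe e) = 2"
proof -
  define v1 where "v1 = row (1,1) (rhoe e)"
  define v2 where "v2 = row (2,2) (rhoe e)"
  have r12: "row (1,2) (rhoe e) = 0" by (simp add: row_def rhoe_def vec_eq_iff)
  have r21: "row (2,1) (rhoe e) = 0" by (simp add: row_def rhoe_def vec_eq_iff)
  have rows: "rows (rhoe e) = {v1, 0, v2}"
  proof -
    have "rows (rhoe e) = {row (1,1) (rhoe e), row (1,2) (rhoe e), row (2,1) (rhoe e), row (2,2) (rhoe e)}"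
      unfolding rows_im UNIV_22 by simp
    then show ?thesis by (auto simp: r12 r21 v1_def v2_def)
  qed
  have v1a: "v1 $ (1,1) = complex_of_real ((1-e)/2 + e)" by (simp add: v1_def row_def rhoe_def)
  have v1b: "v1 $ (2,2) = complex_of_real ((1-e)/2)" by (simp add: v1_def row_def rhoe_def)
  have v2a: "v2 $ (1,1) = complex_of_real ((1-e)/2)" by (simp add: v2_def row_def rhoe_def)
  have v2b: "v2 $ (2,2) = complex_of_real ((1-e)/2)" by (simp add: v2_def row_def rhoe_def)
  have v2nz: "v2 \<noteq> 0"
  proof
    assume "v2 = 0"
    then have "complex_of_real ((1-e)/2) = 0" using v2a by simp
    then show False using assms by (simp only: of_real_eq_0_iff) simp
  qed
  have "v1 \<notin> vec.span {v2}"
  proof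
    assume "v1 \<in> vec.span {v2}"
    then obtain k where k: "v1 = k *s v2" by (auto simp: vec.span_singleton)
    have "complex_of_real ((1-e)/2) = k * complex_of_real ((1-e)/2)"
      using arg_cong[OF k, of "\<lambda>v. v $ (2,2)"] v1b v2b by simp
    moreover have "complex_of_real ((1-e)/2) \<noteq> 0" using assms by (simp only: of_real_eq_0_iff) simp
    ultimately have k1: "k = 1" by (metis mult_cancel_right2)
    have "complex_of_real ((1-e)/2 + e) = complex_of_real ((1-e)/2)"
      using arg_cong[OF k, of "\<lambda>v. v $ (1,1)"] v1a v2a k1 by simp
    then show False using assms by (simp only: of_real_eq_iff)
  qed
  then have ind: "vec.independent {v1, v2}"
  proof (rule vec.independent_insertI)
    show "vec.independent {v2}" using v2nz by simp
  qed
  have ne: "v1 \<noteq> v2" using \<open>v1 \<notin> vec.span {v2}\<close> by (auto intro: vec.span_base)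
  have "vec.dim {v1, v2} = 2" using vec.dim_eq_card_independent[OF ind] ne by simp
  moreover have "vec.dim (rows (rhoe e)) \<le> vec.dim {v1, v2}"
    by (rule vec.dim_mono) (auto simp: rows vec.span_base vec.span_zero)
  moreover have "vec.dim {v1, v2} \<le> vec.dim (rows (rhoe e))"
    by (rule vec.dim_mono) (auto simp: rows vec.span_base)
  ultimately show ?thesis by (simp add: row_rank_def_gen)
qed

lemma bf_diff_mat: "bf (M - N) x y = bf M x y - bf N x y"
  by (simp add: bf_def algebra_simps sum_subtractf)
lemma bf_add_mat: "bf (M + N) x y = bf M x y + bf N x y"
  by (simp add: bf_def algebra_simps sum.distrib)
lemma bf_scaleR_mat: "bf (c *\<^sub>R M) x y = complex_of_real c * bf M x y"
  by (simp only: bf_def vector_scaleR_component) (simp add: sum_distrib_left scaleR_conv_of_real algebra_simps)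

lemma bf_tensor:
  "bf (tensor (projector w) M) (\<chi> r. u$fst r * cnj (v$snd r)) (\<chi> r. u'$fst r * cnj (v'$snd r)) =
   (\<Sum>i\<in>UNIV. cnj (u$i) * w$i) * (\<Sum>i\<in>UNIV. cnj (w$i) * u'$i) *
   (\<Sum>i\<in>UNIV. \<Sum>j\<in>UNIV. v$i * M$i$j * cnj (v'$j))"
  by (simp add: bf_def tensor_def projector_def sum_22 sum_2 algebra_simps)

lemma cs_double:
  fixes E M :: "'i::finite \<Rightarrow> 'j::finite \<Rightarrow> complex"
  shows "(cmod (\<Sum>r\<in>UNIV. \<Sum>c\<in>UNIV. cnj (E r c) * M r c))\<^sup>2 \<le>
         (\<Sum>r\<in>UNIV. \<Sum>c\<in>UNIV. (cmod (E r c))\<^sup>2) * (\<Sum>r\<in>UNIV. \<Sum>c\<in>UNIV. (cmod (M r c))\<^sup>2)"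
proof -
  have "cmod (\<Sum>r\<in>UNIV. \<Sum>c\<in>UNIV. cnj (E r c) * M r c) \<le> (\<Sum>r\<in>UNIV. \<Sum>c\<in>UNIV. cmod (E r c) * cmod (M r c))"
    by (rule order_trans[OF norm_sum], rule sum_mono, rule order_trans[OF norm_sum])
       (simp add: norm_mult)
  also have "\<dots> = (\<Sum>p\<in>UNIV \<times> UNIV. cmod (E (fst p) (snd p)) * cmod (M (fst p) (snd p)))"
    by (simp add: sum.cartesian_product case_prod_beta)
  finally have 1: "cmod (\<Sum>r\<in>UNIV. \<Sum>c\<in>UNIV. cnj (E r c) * M r c) \<le>
      (\<Sum>p\<in>UNIV \<times> UNIV. cmod (E (fst p) (snd p)) * cmod (M (fst p) (snd p)))" .
  have 2: "(\<Sum>p\<in>UNIV \<times> UNIV. cmod (E (fst p) (snd p)) * cmod (M (fst p) (snd p)))\<^sup>2 \<le>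
      (\<Sum>p\<in>UNIV \<times> UNIV. (cmod (E (fst p) (snd p)))\<^sup>2) * (\<Sum>p\<in>UNIV \<times> UNIV. (cmod (M (fst p) (snd p)))\<^sup>2)"
    by (rule Cauchy_Schwarz_ineq_sum)
  have 3: "(\<Sum>p\<in>UNIV \<times> UNIV. f (fst p) (snd p)) = (\<Sum>r\<in>UNIV. \<Sum>c\<in>UNIV. f r c)" for f :: "'i \<Rightarrow> 'j \<Rightarrow> real"
    by (simp add: sum.cartesian_product case_prod_beta)
  have "(cmod (\<Sum>r\<in>UNIV. \<Sum>c\<in>UNIV. cnj (E r c) * M r c))\<^sup>2 \<le>
      (\<Sum>p\<in>UNIV \<times> UNIV. cmod (E (fst p) (snd p)) * cmod (M (fst p) (snd p)))\<^sup>2"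
    using 1 by (simp add: power_mono)
  also note 2
  finally show ?thesis
    using 3[of "\<lambda>r c. (cmod (E r c))\<^sup>2"] 3[of "\<lambda>r c. (cmod (M r c))\<^sup>2"] by simp
qed

lemma E_sum:
  fixes a b :: "'i::finite \<Rightarrow> complex"
  shows "complex_of_real (\<Sum>r\<in>UNIV. \<Sum>c\<in>UNIV. (cmod (a r * cnj (b c) + b r * cnj (a c)))\<^sup>2) =
     2 * ((\<Sum>r\<in>UNIV. cnj (a r) * a r) * (\<Sum>r\<in>UNIV. cnj (b r) * b r)) +
     (\<Sum>r\<in>UNIV. a r * cnj (b r))\<^sup>2 + (\<Sum>r\<in>UNIV. cnj (a r) * b r)\<^sup>2"
proof -
  have "complex_of_real (\<Sum>r\<in>UNIV. \<Sum>c\<in>UNIV. (cmod (a r * cnj (b c) + b r * cnj (a c)))\<^sup>2) =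
    (\<Sum>r\<in>UNIV. \<Sum>c\<in>UNIV. (cnj (a r) * a r) * (cnj (b c) * b c) + (a r * cnj (b r)) * (a c * cnj (b c))
       + (cnj (a r) * b r) * (cnj (a c) * b c) + (cnj (b r) * b r) * (cnj (a c) * a c))"
    by (simp only: of_real_sum cmod_sq_cnj) (simp add: algebra_simps)
  also have "\<dots> = 2 * ((\<Sum>r\<in>UNIV. cnj (a r) * a r) * (\<Sum>r\<in>UNIV. cnj (b r) * b r)) +
     (\<Sum>r\<in>UNIV. a r * cnj (b r))\<^sup>2 + (\<Sum>r\<in>UNIV. cnj (a r) * b r)\<^sup>2"
    by (simp only: sum.distrib sum_product[symmetric]) (simp add: power2_eq_square algebra_simps)
  finally show ?thesis .
qed

lemma lower_X:
  assumes e: "0 \<le> e" "e \<le> 1" and X: "X \<in> Omega0"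
  shows "(1-e)\<^sup>2 / 2 \<le> hs_sq (rhoe e - X)"
proof -
  obtain \<psi> p \<sigma> where Xd: "X = (\<Sum>k\<in>UNIV. p k *\<^sub>R tensor (projector (\<psi> k)) (\<sigma> k))"
      and on: "orthonormal_basis2 \<psi>"
    using X unfolding Omega0_def by blast
  have ob: "(\<Sum>i\<in>UNIV. cnj (\<psi> k $ i) * \<psi> l $ i) = (if k = l then 1 else 0)" for k l
    using on unfolding orthonormal_basis2_def by blast
  have ob1: "(\<Sum>i\<in>UNIV. cnj (\<psi> k $ i) * \<psi> k $ i) = 1" for k using ob[of k k] by simp
  have ob12: "(\<Sum>i\<in>UNIV. cnj (\<psi> 1 $ i) * \<psi> 2 $ i) = 0" using ob[of 1 2] by simp
  have ob21: "(\<Sum>i\<in>UNIV. cnj (\<psi> 2 $ i) * \<psi> 1 $ i) = 0" using ob[of 2 1] by simp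
  define av :: "complex^(2\<times>2)" where "av = (\<chi> r. \<psi> 1 $ fst r * cnj (\<psi> 1 $ snd r))"
  define bv :: "complex^(2\<times>2)" where "bv = (\<chi> r. \<psi> 2 $ fst r * cnj (\<psi> 2 $ snd r))"
  have X0: "bf X av bv = 0" "bf X bv av = 0"
    unfolding Xd av_def bv_def
    using ob12 ob21 by (simp_all add: sum_2 bf_add_mat bf_scaleR_mat bf_tensor)
  have Rab: "bf (rhoe e) av bv = complex_of_real ((1-e)/2) * ((\<Sum>i\<in>UNIV. cnj (\<psi> 1 $ i) * \<psi> 1 $ i) * (\<Sum>i\<in>UNIV. cnj (\<psi> 2 $ i) * \<psi> 2 $ i))
      + complex_of_real e * ((cnj (\<psi> 1 $ 1) * \<psi> 1 $ 1) * (cnj (\<psi> 2 $ 1) * \<psi> 2 $ 1))"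
    by (simp add: bf_def rhoe_def av_def bv_def sum_22 sum_2 algebra_simps)
  have Rba: "bf (rhoe e) bv av = complex_of_real ((1-e)/2) * ((\<Sum>i\<in>UNIV. cnj (\<psi> 2 $ i) * \<psi> 2 $ i) * (\<Sum>i\<in>UNIV. cnj (\<psi> 1 $ i) * \<psi> 1 $ i))
      + complex_of_real e * ((cnj (\<psi> 2 $ 1) * \<psi> 2 $ 1) * (cnj (\<psi> 1 $ 1) * \<psi> 1 $ 1))"
    by (simp add: bf_def rhoe_def av_def bv_def sum_22 sum_2 algebra_simps)
  have reab: "(1-e)/2 \<le> Re (bf (rhoe e) av bv)"
  proof -
    have "bf (rhoe e) av bv = complex_of_real ((1-e)/2 + e * ((cmod (\<psi> 1 $ 1))\<^sup>2 * (cmod (\<psi> 2 $ 1))\<^sup>2))"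
      unfolding Rab ob1 by (simp only: of_real_add of_real_mult cmod_sq_cnj) simp
    then show ?thesis using e by simp
  qed
  have reba: "(1-e)/2 \<le> Re (bf (rhoe e) bv av)"
  proof -
    have "bf (rhoe e) bv av = complex_of_real ((1-e)/2 + e * ((cmod (\<psi> 2 $ 1))\<^sup>2 * (cmod (\<psi> 1 $ 1))\<^sup>2))"
      unfolding Rba ob1 by (simp only: of_real_add of_real_mult cmod_sq_cnj) simp
    then show ?thesis using e by simp
  qed
  define M where "M = rhoe e - X"
  define S where "S = bf M av bv + bf M bv av"
  have reS: "1 - e \<le> Re S"
    using reab reba X0 unfolding S_def M_def by (simp add: bf_diff_mat)
  define E where "E r c = av$r * cnj (bv$c) + bv$r * cnj (av$c)" for r c
  have SE: "S = (\<Sum>r\<in>UNIV. \<Sum>c\<in>UNIV. cnj (E r c) * M$r$c)"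
    unfolding S_def bf_def E_def by (simp add: algebra_simps sum.distrib)
  have A2: "(\<Sum>r\<in>UNIV. cnj (av$r) * av$r) = 1"
  proof -
    have "(\<Sum>r\<in>UNIV. cnj (av$r) * av$r) = (\<Sum>i\<in>UNIV. cnj (\<psi> 1 $ i) * \<psi> 1 $ i) * (\<Sum>i\<in>UNIV. cnj (\<psi> 1 $ i) * \<psi> 1 $ i)"
      by (simp add: av_def sum_22 sum_2 algebra_simps)
    then show ?thesis by (simp add: ob1)
  qed
  have B2: "(\<Sum>r\<in>UNIV. cnj (bv$r) * bv$r) = 1"
  proof -
    have "(\<Sum>r\<in>UNIV. cnj (bv$r) * bv$r) = (\<Sum>i\<in>UNIV. cnj (\<psi> 2 $ i) * \<psi> 2 $ i) * (\<Sum>i\<in>UNIV. cnj (\<psi> 2 $ i) * \<psi> 2 $ i)"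
      by (simp add: bv_def sum_22 sum_2 algebra_simps)
    then show ?thesis by (simp add: ob1)
  qed
  have P: "(\<Sum>r\<in>UNIV. av$r * cnj (bv$r)) = 0"
  proof -
    have "(\<Sum>r\<in>UNIV. av$r * cnj (bv$r)) = (\<Sum>i\<in>UNIV. cnj (\<psi> 2 $ i) * \<psi> 1 $ i) * (\<Sum>i\<in>UNIV. cnj (\<psi> 1 $ i) * \<psi> 2 $ i)"
      by (simp add: av_def bv_def sum_22 sum_2 algebra_simps)
    then show ?thesis by (simp add: ob12)
  qed
  have Q: "(\<Sum>r\<in>UNIV. cnj (av$r) * bv$r) = 0"
  proof -
    have "(\<Sum>r\<in>UNIV. cnj (av$r) * bv$r) = (\<Sum>i\<in>UNIV. cnj (\<psi> 1 $ i) * \<psi> 2 $ i) * (\<Sum>i\<in>UNIV. cnj (\<psi> 2 $ i) * \<psi> 1 $ i)"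
      by (simp add: av_def bv_def sum_22 sum_2 algebra_simps)
    then show ?thesis by (simp add: ob12)
  qed
  have "complex_of_real (\<Sum>r\<in>UNIV. \<Sum>c\<in>UNIV. (cmod (E r c))\<^sup>2) = complex_of_real 2"
    unfolding E_def E_sum[of "\<lambda>r. av$r" "\<lambda>r. bv$r"] A2 B2 P Q by simp
  then have Es: "(\<Sum>r\<in>UNIV. \<Sum>c\<in>UNIV. (cmod (E r c))\<^sup>2) = 2"
    by (simp only: of_real_eq_iff)
  have "(cmod S)\<^sup>2 \<le> 2 * hs_sq M"
    using cs_double[of E "\<lambda>r c. M$r$c"] unfolding SE Es hs_sq_alt .
  moreover have "(1-e)\<^sup>2 \<le> (cmod S)\<^sup>2"
  proof -
    have "1 - e \<le> cmod S" using reS complex_Re_le_cmod[of S] by linarith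
    then show ?thesis using e by (simp add: power_mono)
  qed
  ultimately show ?thesis unfolding M_def by simp
qed

lemma lower:
  assumes "0 \<le> e" "e \<le> 1"
  shows "(1-e)\<^sup>2 \<le> geom_discord (rhoe e)"
proof -
  have st: "is_state (rhoe e)" using rhoe_state assms .
  then have psd: "psd (rhoe e)" and tr1: "mtrace (rhoe e) = 1" by (auto simp: is_state_def)
  have "deph psz (rhoe e) \<in> Omega0"
    unfolding deph_def by (rule dephase_in_Omega0[OF psd on_z]) (simp add: tr_z tr1)
  then have ne: "Omega0 \<noteq> {}" by blast
  have "(1-e)\<^sup>2 / 2 \<le> (INF X\<in>Omega0. hs_sq (rhoe e - X))"
    by (rule cINF_greatest[OF ne]) (rule lower_X[OF assms])
  then show ?thesis by (simp add: geom_discord_def)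
qed

theorem proposition3:
  shows "\<not> (\<exists>\<rho>0 :: qqmat. is_state \<rho>0 \<and> rank \<rho>0 = 2 \<and>
            (\<forall>\<rho> :: qqmat. is_state \<rho> \<and> rank \<rho> = 2 \<longrightarrow> geom_discord \<rho> \<le> geom_discord \<rho>0))"
proof
  assume "\<exists>\<rho>0 :: qqmat. is_state \<rho>0 \<and> rank \<rho>0 = 2 \<and>
            (\<forall>\<rho> :: qqmat. is_state \<rho> \<and> rank \<rho> = 2 \<longrightarrow> geom_discord \<rho> \<le> geom_discord \<rho>0)"
  then obtain \<rho>0 :: qqmat where st: "is_state \<rho>0" and rk: "rank \<rho>0 = 2"
    and mx: "\<And>\<rho>. is_state \<rho> \<Longrightarrow> rank \<rho> = 2 \<Longrightarrow> geom_discord \<rho> \<le> geom_discord \<rho>0" by blast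
  define d where "d = max (geom_discord \<rho>0) 0"
  have d1: "d < 1" using upper[OF st rk] by (simp add: d_def)
  have d0: "0 \<le> d" by (simp add: d_def)
  define e where "e = (1 - d) / 4"
  have e0: "0 < e" and e1: "e < 1" using d0 d1 by (auto simp: e_def)
  have "(1-e)\<^sup>2 \<le> geom_discord (rhoe e)" using lower e0 e1 by simp
  also have "\<dots> \<le> geom_discord \<rho>0" using mx[OF rhoe_state rhoe_rank] e0 e1 by simp
  also have "\<dots> \<le> d" by (simp add: d_def)
  finally have "(1-e)\<^sup>2 \<le> d" .
  moreover have "1 - 2*e \<le> (1-e)\<^sup>2" by (simp add: power2_eq_square algebra_simps)
  ultimately have "1 - 2*e \<le> d" by linarith
  moreover have "1 - 2*e = (1+d)/2" by (simp add: e_def field_simps)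
  ultimately have "(1+d)/2 \<le> d" by simp
  then have "1 \<le> d" by simp
  then show False using d1 by simp
qed

end
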